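(* Let $p,q$ be fixed distinct propositional letters (only $p$ is used). Define $p^0:=p$ and $p^{n+1}:=p\to p^n$, and for $T\subseteq\omega$ let $K_T=\{p\looparrowright p^k:k\in T\}$. Then: (i) for every non-empty $T\subseteq\omega\setminus\{0\}$, the logic $\mathcal{F}K_T$ is Epstein complete; more precisely, $\mathcal{F}K_T=\{\varphi\in\mathsf{FOR}:\mathfrak{R}\vDash\varphi\text{ for all }\mathfrak{R}\in\mathsf{R}^T\}$, where $\mathfrak{R}^T_0=\{\langle\sigma(p),\sigma(p^k)\rangle:\sigma\text{ a substitution},\ k\in T\}$ and $\mathsf{R}^T=\{\mathfrak{R}\subseteq\mathsf{FOR}^2:\mathfrak{R}^T_0\subseteq\mathfrak{R}\}$; (ii) for non-empty $T,V\subseteq\omega\setminus\{0\}$ with $T\neq V$ we have $\mathcal{F}K_T\neq\mathcal{F}K_V$. Consequently there are exactly $2^{\aleph_0}$ Epstein complete logics (extensions of $\mathcal{F}$).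
   Context: Language: propositional letters $\Phi=\{p_0,p_1,\dots\}$; connectives $\neg$ (unary), $\lor,\wedge,\to,\leftrightarrow,\vartriangle,\looparrowright$ (binary); $\mathsf{FOR}$ the set of all formulas. A substitution is an endomorphism of the free formula algebra (determined by an arbitrary map $\Phi\to\mathsf{FOR}$). An Epstein model is $\langle v,\mathfrak{R}\rangle$ with $v:\Phi\to\{0,1\}$ and $\mathfrak{R}\subseteq\mathsf{FOR}^2$; truth: letters via $v$, boolean connectives classical, $\langle v,\mathfrak{R}\rangle\vDash\varphi\vartriangle\psi$ iff both $\varphi,\psi$ true and $\langle\varphi,\psi\rangle\in\mathfrak{R}$, $\langle v,\mathfrak{R}\rangle\vDash\varphi\looparrowright\psi$ iff $\varphi\to\psi$ true and $\langle\varphi,\psi\rangle\in\mathfrak{R}$. $\mathfrak{R}\vDash\varphi$ iff $\langle v,\mathfrak{R}\rangle\vDash\varphi$ for every valuation $v$. $\mathcal{F}$ is the least set of formulas containing all classical tautologies of this language (substitution instances of propositional tautologies) and the axioms $(p\looparrowright q)\to(p\to q)$ and $(p\vartriangle q)\leftrightarrow((p\looparrowright q)\wedge(p\wedge q))$, closed under uniform substitution and modus ponens; $\mathcal{F}$ coincides with the set of formulas true in all Epstein models. For $\Lambda\subseteq\mathsf{FOR}$, $\mathcal{F}\Lambda$ is the least set containing $\mathcal{F}\cup\Lambda$ closed under uniform substitution and modus ponens. A logic is a set of formulas containing $\mathcal{F}$ closed under uniform substitution and modus ponens. A logic $\lambda$ is Epstein complete iff there is a set $X$ of Epstein relations with $\lambda=\{\varphi:\mathfrak{R}\vDash\varphi\text{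 for all }\mathfrak{R}\in X\}$; otherwise Epstein incomplete. *)

theory Defs
  imports Main "HOL-Library.Equipollence"
begin

text \<open>Formulas: letters p_n = Var n; Tri = relatedness conjunction, Loop = relatedness implication.\<close>
datatype form = Var nat | Neg form | Disj form form | Conj form form | Imp form form
  | Iff form form | Tri form form | Loop form form

type_synonym rel = "(form \<times> form) set"

fun subst :: "(nat \<Rightarrow> form) \<Rightarrow> form \<Rightarrow> form" where
  "subst \<sigma> (Var n) = \<sigma> n"
| "subst \<sigma> (Neg a) = Neg (subst \<sigma> a)"
| "subst \<sigma> (Disj a b) = Disj (subst \<sigma> a) (subst \<sigma> b)"
| "subst \<sigma> (Conj a b) = Conj (subst \<sigma> a) (subst \<sigma> b)"
| "subst \<sigma> (Imp a b) = Imp (subst \<sigma> a) (subst \<sigma> b)"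
| "subst \<sigma> (Iff a b) = Iff (subst \<sigma> a) (subst \<sigma> b)"
| "subst \<sigma> (Tri a b) = Tri (subst \<sigma> a) (subst \<sigma> b)"
| "subst \<sigma> (Loop a b) = Loop (subst \<sigma> a) (subst \<sigma> b)"

fun boolean :: "form \<Rightarrow> bool" where
  "boolean (Var n) = True"
| "boolean (Neg a) = boolean a"
| "boolean (Disj a b) = (boolean a \<and> boolean b)"
| "boolean (Conj a b) = (boolean a \<and> boolean b)"
| "boolean (Imp a b) = (boolean a \<and> boolean b)"
| "boolean (Iff a b) = (boolean a \<and> boolean b)"
| "boolean (Tri a b) = False"
| "boolean (Loop a b) = False"

text \<open>Classical evaluation (only meaningful on boolean formulas).\<close>
fun evalc :: "(nat \<Rightarrow> bool) \<Rightarrow> form \<Rightarrow> bool" where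
  "evalc v (Var n) = v n"
| "evalc v (Neg a) = (\<not> evalc v a)"
| "evalc v (Disj a b) = (evalc v a \<or> evalc v b)"
| "evalc v (Conj a b) = (evalc v a \<and> evalc v b)"
| "evalc v (Imp a b) = (evalc v a \<longrightarrow> evalc v b)"
| "evalc v (Iff a b) = (evalc v a \<longleftrightarrow> evalc v b)"
| "evalc v (Tri a b) = False"
| "evalc v (Loop a b) = False"

definition prop_taut :: "form \<Rightarrow> bool" where
  "prop_taut \<phi> \<longleftrightarrow> boolean \<phi> \<and> (\<forall>v. evalc v \<phi>)"

definition class_taut :: "form set" where
  "class_taut = {subst \<sigma> \<phi> | \<sigma> \<phi>. prop_taut \<phi>}"

fun models :: "(nat \<Rightarrow> bool) \<Rightarrow> rel \<Rightarrow> form \<Rightarrow> bool" where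
  "models v R (Var n) = v n"
| "models v R (Neg a) = (\<not> models v R a)"
| "models v R (Disj a b) = (models v R a \<or> models v R b)"
| "models v R (Conj a b) = (models v R a \<and> models v R b)"
| "models v R (Imp a b) = (models v R a \<longrightarrow> models v R b)"
| "models v R (Iff a b) = (models v R a \<longleftrightarrow> models v R b)"
| "models v R (Tri a b) = (models v R a \<and> models v R b \<and> (a, b) \<in> R)"
| "models v R (Loop a b) = ((models v R a \<longrightarrow> models v R b) \<and> (a, b) \<in> R)"

definition rel_valid :: "rel \<Rightarrow> form \<Rightarrow> bool" where
  "rel_valid R \<phi> \<longleftrightarrow> (\<forall>v. models v R \<phi>)"

abbreviation pp :: form where "pp \<equiv> Var 0"
abbreviation qq :: form where "qq \<equiv> Var 1"

inductive_set FL :: "form set \<Rightarrow> form set" for \<Lambda> :: "form set" where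
  taut: "\<phi> \<in> class_taut \<Longrightarrow> \<phi> \<in> FL \<Lambda>"
| ax1: "Imp (Loop pp qq) (Imp pp qq) \<in> FL \<Lambda>"
| ax2: "Iff (Tri pp qq) (Conj (Loop pp qq) (Conj pp qq)) \<in> FL \<Lambda>"
| hyp: "\<phi> \<in> \<Lambda> \<Longrightarrow> \<phi> \<in> FL \<Lambda>"
| sub: "\<phi> \<in> FL \<Lambda> \<Longrightarrow> subst \<sigma> \<phi> \<in> FL \<Lambda>"
| mp: "\<phi> \<in> FL \<Lambda> \<Longrightarrow> Imp \<phi> \<psi> \<in> FL \<Lambda> \<Longrightarrow> \<psi> \<in> FL \<Lambda>"

definition F :: "form set" where "F = FL {}"

definition is_logic :: "form set \<Rightarrow> bool" where
  "is_logic L \<longleftrightarrow> F \<subseteq> L \<and> (\<forall>\<sigma>. \<forall>\<phi>\<in>L. subst \<sigma> \<phi> \<in> L)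
     \<and> (\<forall>\<phi> \<psi>. \<phi> \<in> L \<longrightarrow> Imp \<phi> \<psi> \<in> L \<longrightarrow> \<psi> \<in> L)"

definition epstein_complete :: "form set \<Rightarrow> bool" where
  "epstein_complete L \<longleftrightarrow> (\<exists>X :: rel set. L = {\<phi>. \<forall>R\<in>X. rel_valid R \<phi>})"

fun ppow :: "nat \<Rightarrow> form" where
  "ppow 0 = pp"
| "ppow (Suc n) = Imp pp (ppow n)"

definition K :: "nat set \<Rightarrow> form set" where
  "K T = {Loop pp (ppow k) | k. k \<in> T}"

definition R0 :: "nat set \<Rightarrow> rel" where
  "R0 T = {(subst \<sigma> pp, subst \<sigma> (ppow k)) | \<sigma> k. k \<in> T}"

definition RT :: "nat set \<Rightarrow> rel set" where
  "RT T = {R. R0 T \<subseteq> R}"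

end

theory Submission
  imports Defs "HOL-Library.Countable"
begin

instance form :: countable by countable_datatype

lemma subst_Var: "subst Var x = x"
  by (induction x) auto

lemma subst_comp: "subst \<sigma> (subst \<tau> x) = subst (\<lambda>n. subst \<sigma> (\<tau> n)) x"
  by (induction x) auto

lemma models_bool: "boolean \<psi> \<Longrightarrow> models v R \<psi> = evalc v \<psi>"
  by (induction \<psi>) auto

lemma models_subst:
  "models v R (subst \<sigma> \<phi>) = models (\<lambda>n. models v R (\<sigma> n)) {(a,b). (subst \<sigma> a, subst \<sigma> b) \<in> R} \<phi>"
  by (induction \<phi>) auto

lemma ppow_true: "models v R pp \<Longrightarrow> models v R (ppow n)"
  by (induction n) auto

lemma soundness:
  assumes "\<phi> \<in> FL (K T)"
  shows "R0 T \<subseteq> R \<Longrightarrow> models v R \<phi>"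
  using assms
proof (induction arbitrary: v R rule: FL.induct)
  case (taut \<phi>)
  then obtain \<sigma> \<psi> where "\<phi> = subst \<sigma> \<psi>" "prop_taut \<psi>" unfolding class_taut_def by blast
  then show ?case using models_subst models_bool unfolding prop_taut_def by metis
next
  case ax1 then show ?case by auto
next
  case ax2 then show ?case by auto
next
  case (hyp \<phi>)
  then obtain k where k: "k \<in> T" "\<phi> = Loop pp (ppow k)" unfolding K_def by blast
  have "(subst Var pp, subst Var (ppow k)) \<in> R0 T" unfolding R0_def using k(1) by blast
  then have "(pp, ppow k) \<in> R0 T" by (simp only: subst_Var)
  then show ?case using k hyp ppow_true by auto
next
  case (sub \<phi> \<sigma>)
  have "R0 T \<subseteq> {(a,b). (subst \<sigma> a, subst \<sigma> b) \<in> R}"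
  proof
    fix x assume "x \<in> R0 T"
    then obtain \<tau> k where "x = (subst \<tau> pp, subst \<tau> (ppow k))" "k \<in> T" unfolding R0_def by blast
    moreover have "(subst (\<lambda>n. subst \<sigma> (\<tau> n)) pp, subst (\<lambda>n. subst \<sigma> (\<tau> n)) (ppow k)) \<in> R0 T"
      unfolding R0_def using \<open>k \<in> T\<close> by blast
    ultimately show "x \<in> {(a,b). (subst \<sigma> a, subst \<sigma> b) \<in> R}"
      using sub.prems subst_comp by auto
  qed
  then show ?case using sub.IH models_subst by metis
next
  case (mp \<phi> \<psi>) then show ?case by fastforce
qed

fun ab :: "form \<Rightarrow> form" where
  "ab (Var n) = Var (2*n)"
| "ab (Neg a) = Neg (ab a)"
| "ab (Disj a b) = Disj (ab a) (ab b)"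
| "ab (Conj a b) = Conj (ab a) (ab b)"
| "ab (Imp a b) = Imp (ab a) (ab b)"
| "ab (Iff a b) = Iff (ab a) (ab b)"
| "ab (Tri a b) = Var (2 * to_nat (Tri a b) + 1)"
| "ab (Loop a b) = Var (2 * to_nat (Loop a b) + 1)"

definition s0 :: "nat \<Rightarrow> form" where
  "s0 n = (if even n then Var (n div 2) else from_nat (n div 2))"

lemma subst_ab: "subst s0 (ab \<psi>) = \<psi>"
  by (induction \<psi>) (auto simp: s0_def)

lemma boolean_ab: "boolean (ab \<psi>)"
  by (induction \<psi>) auto

lemma taut_closure:
  assumes "finite G" "G \<subseteq> FL \<Lambda>" "\<forall>w. (\<forall>g\<in>G. evalc w (ab g)) \<longrightarrow> evalc w (ab \<phi>)"
  shows "\<phi> \<in> FL \<Lambda>"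
  using assms
proof (induction G arbitrary: \<phi> rule: finite_induct)
  case empty
  then have "prop_taut (ab \<phi>)" unfolding prop_taut_def using boolean_ab by auto
  moreover have "\<phi> = subst s0 (ab \<phi>)" by (simp add: subst_ab)
  ultimately have "\<phi> \<in> class_taut" unfolding class_taut_def by blast
  then show ?case by (rule FL.taut)
next
  case (insert g G)
  have "Imp g \<phi> \<in> FL \<Lambda>" using insert by auto
  then show ?case using insert FL.mp by blast
qed

fun subs :: "form \<Rightarrow> form set" where
  "subs (Var n) = {Var n}"
| "subs (Neg a) = insert (Neg a) (subs a)"
| "subs (Disj a b) = insert (Disj a b) (subs a \<union> subs b)"
| "subs (Conj a b) = insert (Conj a b) (subs a \<union> subs b)"
| "subs (Imp a b) = insert (Imp a b) (subs a \<union> subs b)"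
| "subs (Iff a b) = insert (Iff a b) (subs a \<union> subs b)"
| "subs (Tri a b) = insert (Tri a b) (subs a \<union> subs b)"
| "subs (Loop a b) = insert (Loop a b) (subs a \<union> subs b)"

lemma finite_subs: "finite (subs \<psi>)"
  by (induction \<psi>) auto

lemma self_subs: "\<psi> \<in> subs \<psi>"
  by (cases \<psi>) auto

fun gam :: "nat set \<Rightarrow> form \<Rightarrow> form set" where
  "gam T (Loop a b) = insert (Imp (Loop a b) (Imp a b)) (if (a,b) \<in> R0 T then {Loop a b} else {})"
| "gam T (Tri a b) = insert (Iff (Tri a b) (Conj (Loop a b) (Conj a b))) (if (a,b) \<in> R0 T then {Loop a b} else {})"
| "gam T _ = {}"

lemma finite_gam: "finite (gam T \<psi>)"
  by (cases \<psi>) auto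

lemma subst2: "subst (\<lambda>n. if n = 0 then a else if n = 1 then b else Var n) pp = a"
  "subst (\<lambda>n. if n = 0 then a else if n = 1 then b else Var n) qq = b"
  by auto

lemma gam_FL: "gam T \<psi> \<subseteq> FL (K T)"
proof (cases \<psi>)
  case (Loop a b)
  let ?s = "\<lambda>n. if n = 0 then a else if n = 1 then b else Var n"
  have 1: "Imp (Loop a b) (Imp a b) \<in> FL (K T)"
    using FL.sub[OF FL.ax1, of ?s] by simp
  have 2: "Loop a b \<in> FL (K T)" if r: "(a,b) \<in> R0 T"
  proof -
    obtain \<sigma> k where "a = subst \<sigma> pp" "b = subst \<sigma> (ppow k)" "k \<in> T"
      using r unfolding R0_def by blast
    moreover have "Loop pp (ppow k) \<in> FL (K T)" using \<open>k \<in> T\<close> by (auto simp: K_def intro: FL.hyp)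
    ultimately show ?thesis using FL.sub[of "Loop pp (ppow k)" "K T" \<sigma>] by simp
  qed
  show ?thesis using Loop 1 2 by auto
next
  case (Tri a b)
  let ?s = "\<lambda>n. if n = 0 then a else if n = 1 then b else Var n"
  have 1: "Iff (Tri a b) (Conj (Loop a b) (Conj a b)) \<in> FL (K T)"
    using FL.sub[OF FL.ax2, of ?s] by simp
  have 2: "Loop a b \<in> FL (K T)" if r: "(a,b) \<in> R0 T"
  proof -
    obtain \<sigma> k where "a = subst \<sigma> pp" "b = subst \<sigma> (ppow k)" "k \<in> T"
      using r unfolding R0_def by blast
    moreover have "Loop pp (ppow k) \<in> FL (K T)" using \<open>k \<in> T\<close> by (auto simp: K_def intro: FL.hyp)
    ultimately show ?thesis using FL.sub[of "Loop pp (ppow k)" "K T" \<sigma>] by simp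
  qed
  show ?thesis using Tri 1 2 by auto
qed auto

lemma eval_lemma:
  assumes G: "\<forall>g\<in>\<Union>(gam T ` subs \<phi>). evalc w (ab g)"
  defines "R \<equiv> R0 T \<union> {(a,b). w (2 * to_nat (Loop a b) + 1)}"
  shows "subs \<psi> \<subseteq> subs \<phi> \<Longrightarrow> models (\<lambda>n. w (2*n)) R \<psi> = evalc w (ab \<psi>)"
proof (induction \<psi>)
  case (Loop a b)
  have inS: "Loop a b \<in> subs \<phi>" using Loop.prems self_subs by blast
  have g1: "evalc w (ab (Imp (Loop a b) (Imp a b)))" using G inS by fastforce
  have Rr: "(a,b) \<in> R \<longleftrightarrow> w (2 * to_nat (Loop a b) + 1)"
  proof
    assume "(a,b) \<in> R"
    then show "w (2 * to_nat (Loop a b) + 1)"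
    proof (cases "(a,b) \<in> R0 T")
      case True
      then have "Loop a b \<in> gam T (Loop a b)" by simp
      then show ?thesis using G inS by fastforce
    qed (auto simp: R_def)
  qed (auto simp: R_def)
  show ?case using Loop g1 Rr by auto
next
  case (Tri a b)
  have inS: "Tri a b \<in> subs \<phi>" using Tri.prems self_subs by blast
  have g1: "evalc w (ab (Iff (Tri a b) (Conj (Loop a b) (Conj a b))))" using G inS by fastforce
  have Rr: "(a,b) \<in> R \<longleftrightarrow> w (2 * to_nat (Loop a b) + 1)"
  proof
    assume "(a,b) \<in> R"
    then show "w (2 * to_nat (Loop a b) + 1)"
    proof (cases "(a,b) \<in> R0 T")
      case True
      then have "Loop a b \<in> gam T (Tri a b)" by simp
      then show ?thesis using G inS by fastforce
    qed (auto simp: R_def)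
  qed (auto simp: R_def)
  show ?case using Tri g1 Rr by auto
qed auto

lemma completeness:
  assumes "\<forall>R \<in> RT T. rel_valid R \<phi>"
  shows "\<phi> \<in> FL (K T)"
proof (rule taut_closure[of "\<Union>(gam T ` subs \<phi>)"])
  show "finite (\<Union>(gam T ` subs \<phi>))" using finite_subs finite_gam by auto
  show "\<Union>(gam T ` subs \<phi>) \<subseteq> FL (K T)" using gam_FL by blast
  show "\<forall>w. (\<forall>g\<in>\<Union>(gam T ` subs \<phi>). evalc w (ab g)) \<longrightarrow> evalc w (ab \<phi>)"
  proof (intro allI impI)
    fix w assume G: "\<forall>g\<in>\<Union>(gam T ` subs \<phi>). evalc w (ab g)"
    let ?R = "R0 T \<union> {(a,b). w (2 * to_nat (Loop a b) + 1)}"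
    have "?R \<in> RT T" unfolding RT_def by auto
    then have "models (\<lambda>n. w (2*n)) ?R \<phi>" using assms unfolding rel_valid_def by blast
    then show "evalc w (ab \<phi>)" using eval_lemma[OF G, of \<phi>] by simp
  qed
qed

lemma charact: "FL (K T) = {\<phi>. \<forall>R \<in> RT T. rel_valid R \<phi>}"
  using soundness completeness unfolding RT_def rel_valid_def by blast

lemma subst_ppow: "subst \<sigma> (ppow j) = ppow k \<Longrightarrow> \<sigma> 0 = pp \<Longrightarrow> j = k"
proof (induction j arbitrary: k)
  case 0 then show ?case by (cases k) auto
next
  case (Suc j) then show ?case by (cases k) auto
qed

lemma distinct_logics:
  assumes "k \<in> T" "k \<notin> V"
  shows "FL (K T) \<noteq> FL (K V)"
proof
  assume eq: "FL (K T) = FL (K V)"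
  have "Loop pp (ppow k) \<in> FL (K T)" using assms by (auto simp: K_def intro: FL.hyp)
  then have "Loop pp (ppow k) \<in> FL (K V)" using eq by simp
  then have "models (\<lambda>_. True) (R0 V) (Loop pp (ppow k))" using soundness by blast
  then have "(pp, ppow k) \<in> R0 V" by simp
  then obtain \<sigma> j where "pp = subst \<sigma> pp" "ppow k = subst \<sigma> (ppow j)" "j \<in> V"
    unfolding R0_def by blast
  moreover have "\<sigma> 0 = pp" using \<open>pp = subst \<sigma> pp\<close> by simp
  ultimately have "j = k" using subst_ppow by metis
  then show False using \<open>j \<in> V\<close> assms(2) by simp
qed

lemma FL_mono: "\<phi> \<in> FL A \<Longrightarrow> A \<subseteq> B \<Longrightarrow> \<phi> \<in> FL B"
  by (induction rule: FL.induct) (auto intro: FL.taut FL.hyp FL.sub FL.mp FL.ax1[simplified] FL.ax2[simplified])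

lemma logic_FL: "is_logic (FL A)"
  unfolding is_logic_def F_def using FL_mono FL.sub FL.mp by blast

theorem mainTheorem3:
  shows "(\<forall>T :: nat set. T \<noteq> {} \<and> 0 \<notin> T \<longrightarrow>
            epstein_complete (FL (K T)) \<and>
            FL (K T) = {\<phi>. \<forall>R \<in> RT T. rel_valid R \<phi>})
       \<and> (\<forall>T V :: nat set. T \<noteq> {} \<and> 0 \<notin> T \<and> V \<noteq> {} \<and> 0 \<notin> V \<and> T \<noteq> V \<longrightarrow>
            FL (K T) \<noteq> FL (K V))
       \<and> {L. is_logic L \<and> epstein_complete L} \<approx> (UNIV :: nat set set)"
proof (intro conjI allI impI)
  fix T :: "nat set"
  show "epstein_complete (FL (K T))" unfolding epstein_complete_def using charact by blast
  show "FL (K T) = {\<phi>. \<forall>R \<in> RT T. rel_valid R \<phi>}" by (rule charact)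
next
  fix T V :: "nat set"
  assume "T \<noteq> {} \<and> 0 \<notin> T \<and> V \<noteq> {} \<and> 0 \<notin> V \<and> T \<noteq> V"
  then obtain k where "(k \<in> T \<and> k \<notin> V) \<or> (k \<in> V \<and> k \<notin> T)" by blast
  then show "FL (K T) \<noteq> FL (K V)" using distinct_logics by metis
next
  let ?A = "{L. is_logic L \<and> epstein_complete L}"
  let ?f = "\<lambda>T :: nat set. FL (K (insert 1 ((\<lambda>n. n + 2) ` T)))"
  have "inj ?f"
  proof (rule injI)
    fix S T :: "nat set" assume e: "?f S = ?f T"
    show "S = T"
    proof (rule ccontr)
      assume "S \<noteq> T"
      then obtain k where "(k \<in> S \<and> k \<notin> T) \<or> (k \<in> T \<and> k \<notin> S)" by blast
      then have "(k+2 \<in> insert 1 ((\<lambda>n. n + 2) ` S) \<and> k+2 \<notin> insert 1 ((\<lambda>n. n + 2) ` T)) \<or>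
                 (k+2 \<in> insert 1 ((\<lambda>n. n + 2) ` T) \<and> k+2 \<notin> insert 1 ((\<lambda>n. n + 2) ` S))"
        by auto
      then show False using distinct_logics e by metis
    qed
  qed
  moreover have "?f ` UNIV \<subseteq> ?A"
    using logic_FL charact unfolding epstein_complete_def by blast
  ultimately have 1: "(UNIV :: nat set set) \<lesssim> ?A" unfolding lepoll_def by blast
  have "inj_on (\<lambda>L. to_nat ` L) ?A" by (rule inj_onI) (simp add: inj_image_eq_iff)
  then have 2: "?A \<lesssim> (UNIV :: nat set set)" unfolding lepoll_def by blast
  show "?A \<approx> (UNIV :: nat set set)" using lepoll_antisym[OF 2 1] .
qed

end
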